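(* Let $c=7.29$ and $d=5.14$, and let $G=(V,E)$ be the binomial random graph $G(cn, d/n)$. Then asymptotically almost surely the following two properties hold: (i) $|E(G)| = (1+o(1))\, n c^2 d/2 < 137n$; (ii) for every two disjoint sets of vertices $S,T \subseteq V$ with $|S|=|T| = n(c-3)/4$, we have $e(S,T)\neq 0$.
   Context: The binomial random graph $G(N,p)$ is the random graph on vertex set $[N]$ in which each pair $\{i,j\}$ is an edge independently with probability $p$. An event holds asymptotically almost surely (a.a.s.) if its probability tends to $1$ as $n\to\infty$. For disjoint vertex sets $S,T$, $e(S,T)$ denotes the number of edges with one endpoint in $S$ and the other in $T$. Quantities such as $cn$ and $n(c-3)/4$ are treated as integers (rounding is ignored). *)

theory Defs
  imports "HOL-Probability.Probability"
begin

text \<open>Vertex set of G(N,p) is {0..<N}; an edge {i,j} is represented as the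
ordered pair (i,j) with i < j.\<close>

definition vertex_pairs :: "nat \<Rightarrow> (nat \<times> nat) set" where
  "vertex_pairs N = {(i, j). i < j \<and> j < N}"

definition gnp :: "nat \<Rightarrow> real \<Rightarrow> (nat \<times> nat) set pmf" where
  "gnp N p = map_pmf (\<lambda>f. {e \<in> vertex_pairs N. f e})
                     (Pi_pmf (vertex_pairs N) False (\<lambda>_. bernoulli_pmf p))"

definition edges_between :: "(nat \<times> nat) set \<Rightarrow> nat set \<Rightarrow> nat set \<Rightarrow> nat" where
  "edges_between E S T = card {(i, j) \<in> E. (i \<in> S \<and> j \<in> T) \<or> (i \<in> T \<and> j \<in> S)}"

end

theory Submission
  imports Defs
begin


lemma ln_upper_sym:
  fixes t :: real assumes "1 \<le> t" shows "ln t \<le> (t - 1/t)/2"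
proof -
  let ?g = "\<lambda>x::real. (x - 1/x)/2 - ln x"
  have "?g 1 \<le> ?g t"
  proof (rule DERIV_nonneg_imp_nondecreasing[OF assms])
    fix x :: real assume x: "1 \<le> x" "x \<le> t"
    have "DERIV ?g x :> ((1 + 1/x^2)/2 - 1/x)"
      using x by (auto intro!: derivative_eq_intros simp: field_simps power2_eq_square)
    moreover have "(1 + 1/x^2)/2 - 1/x = (1 - 1/x)^2/2"
      using x by (simp add: field_simps power2_eq_square)
    ultimately show "\<exists>y. DERIV ?g x :> y \<and> 0 \<le> y" by auto
  qed
  thus ?thesis by simp
qed

lemma ln_lower_sym:
  fixes t :: real assumes "1 \<le> t" shows "2*(t - 1)/(t+1) \<le> ln t"
proof -
  let ?g = "\<lambda>x::real. ln x - 2 + 4/(x+1)"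
  have "?g 1 \<le> ?g t"
  proof (rule DERIV_nonneg_imp_nondecreasing[OF assms])
    fix x :: real assume x: "1 \<le> x" "x \<le> t"
    have "DERIV ?g x :> (1/x - 4/(x+1)^2)"
      using x by (auto intro!: derivative_eq_intros simp: power2_eq_square)
    moreover have "0 \<le> 1/x - 4/(x+1)^2"
    proof -
      have "4*x \<le> (x+1)^2" using zero_le_power2[of "x-1"] by (simp add: power2_eq_square algebra_simps)
      hence "4/(x+1)^2 \<le> 1/x" using x by (simp add: divide_simps)
      thus ?thesis by simp
    qed
    ultimately show "\<exists>y. DERIV ?g x :> y \<and> 0 \<le> y" by auto
  qed
  moreover have "2*(t - 1)/(t+1) = 2 - 4/(t+1)" using assms by (simp add: field_simps)
  ultimately show ?thesis by simp
qed

lemma ln2_upper: "ln (2::real) \<le> 7*((16/15 - 15/16)/2) + 5*((25/24-24/25)/2) + 3*((81/80-80/81)/2)"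
proof -
  have "(2::real) = (16/15)^7 * (25/24)^5 * (81/80)^3" by (simp add: power_divide)
  hence "ln (2::real) = ln ((16/15)^7 * (25/24)^5 * (81/80)^3)" by simp
  also have "\<dots> = 7 * ln (16/15) + 5 * ln (25/24) + 3 * ln (81/80)"
    by (simp only: ln_mult ln_realpow) (auto simp: ln_mult ln_realpow)
  finally have eq: "ln (2::real) = 7 * ln (16/15) + 5 * ln (25/24) + 3 * ln (81/80)" .
  moreover have "ln (16/15::real) \<le> (16/15 - 15/16)/2" using ln_upper_sym[of "16/15"] by simp
  moreover have "ln (25/24::real) \<le> (25/24 - 24/25)/2" using ln_upper_sym[of "25/24"] by simp
  moreover have "ln (81/80::real) \<le> (81/80 - 80/81)/2" using ln_upper_sym[of "81/80"] by simp
  ultimately show ?thesis by linarith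
qed

lemma F_neg:
  "2.145 * ln (7.29 / 1.0725) + (7.29 - 2*1.0725) * ln (7.29 / (7.29 - 2*1.0725)) - 5.14 * 1.0725^2 < (0::real)"
proof -
  have l27: "ln (27::real) = 3 * ln 3" using ln_realpow[of 3 3] by simp
  have l4: "ln (4::real) = 2 * ln 2" using ln_realpow[of 2 2] by simp
  have l16: "ln (16::real) = 4 * ln 2" using ln_realpow[of 2 4] by simp
  have l243: "ln (243::real) = 5 * ln 3" using ln_realpow[of 3 5] by simp
  have l256: "ln (256::real) = 8 * ln 2" using ln_realpow[of 2 8] by simp
  have l343: "ln (343::real) = 3 * ln 7" using ln_realpow[of 7 3] by simp
  have l49: "ln (49::real) = 2 * ln 7" using ln_realpow[of 7 2] by simp
  have "(7.29 / 1.0725::real) = 27/4 * (144/143)" by simp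
  hence e1: "ln (7.29 / 1.0725::real) = ln 27 - ln 4 + ln (144/143)"
    by (simp only: ln_mult ln_div) (simp add: ln_mult ln_div)
  have "(7.29 / (7.29 - 2*1.0725)::real) = 2 * 243 / 343" by simp
  hence e2: "ln (7.29 / (7.29 - 2*1.0725)::real) = ln 2 + ln 243 - ln 343"
  proof -
    have a: "ln ((2::real)*243/343) = ln (2*243) - ln 343" using ln_div[of "2*243" 343] by simp
    have b: "ln ((2::real)*243) = ln 2 + ln 243" using ln_mult[of 2 243] by simp
    show ?thesis using a b \<open>_ = 2 * 243 / 343\<close> by simp
  qed
  have "(49::real) = 16 * 3 * (49/48)" by simp
  hence e3: "ln (49::real) = ln 16 + ln 3 + ln (49/48)"
  proof -
    have a: "ln ((16::real)*3*(49/48)) = ln (16*3) + ln (49/48)" using ln_mult[of "16*3" "49/48"] by simp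
    have b: "ln ((16::real)*3) = ln 16 + ln 3" using ln_mult[of 16 3] by simp
    show ?thesis using a b by simp
  qed
  have "(243::real) = 256 / (256/243)" by simp
  hence e4: "ln (243::real) = ln 256 - ln (256/243)"
  proof -
    have a: "ln ((256::real)/(256/243)) = ln 256 - ln (256/243)" using ln_div[of 256 "256/243"] by simp
    show ?thesis using a by simp
  qed
  have b1: "ln (144/143::real) \<le> (144/143 - 143/144)/2" using ln_upper_sym[of "144/143"] by simp
  have b2: "2*(49/48 - 1)/(49/48+1) \<le> ln (49/48::real)" using ln_lower_sym[of "49/48"] by simp
  have b3: "2*(256/243 - 1)/(256/243+1) \<le> ln (256/243::real)" using ln_lower_sym[of "256/243"] by simp
  define A where "A = ln (2::real)"
  define B where "B = ln (3::real)"
  define C where "C = ln (7::real)"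
  define L1 where "L1 = ln (49/48::real)"
  define L2 where "L2 = ln (144/143::real)"
  define L3 where "L3 = ln (256/243::real)"
  have E1: "ln (7.29 / 1.0725::real) = 3*B - 2*A + L2" using e1 l27 l4 unfolding A_def B_def L2_def by simp
  have E2: "ln (7.29 / (7.29 - 2*1.0725)::real) = A + 5*B - 3*C" using e2 l243 l343 unfolding A_def B_def C_def by simp
  have E3: "2*C = 4*A + B + L1" using e3 l49 l16 unfolding A_def B_def C_def L1_def by simp
  have E4: "5*B = 8*A - L3" using e4 l243 l256 unfolding A_def B_def L3_def by simp
  have B1: "L2 \<le> (144/143 - 143/144)/2" using b1 unfolding L2_def .
  have B2: "2*(49/48 - 1)/(49/48+1) \<le> L1" using b2 unfolding L1_def .
  have B3: "2*(256/243 - 1)/(256/243+1) \<le> L3" using b3 unfolding L3_def .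
  have B4: "A \<le> 7*((16/15 - 15/16)/2) + 5*((25/24-24/25)/2) + 3*((81/80-80/81)/2)" using ln2_upper unfolding A_def .
  have X: "2.145 * (3*B - 2*A + L2) + (7.29 - 2*1.0725) * (A + 5*B - 3*C) = 9.093*A - 4.8885*L3 - 7.7175*L1 + 2.145*L2"
    using E3 E4 by (simp add: field_simps)
  have "9.093*A - 4.8885*L3 - 7.7175*L1 + 2.145*L2 - 5.14 * 1.0725^2 < (0::real)"
    using B1 B2 B3 B4 by (simp add: power_divide)
  hence "2.145 * (3*B - 2*A + L2) + (7.29 - 2*1.0725) * (A + 5*B - 3*C) - 5.14 * 1.0725^2 < (0::real)"
    using X by linarith
  thus ?thesis using E1 E2 by simp
qed


lemma binom_exp_Suc:
  fixes f :: "nat \<Rightarrow> real"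
  assumes p: "p \<in> {0..1}"
  shows "measure_pmf.expectation (binomial_pmf (Suc n) p) f =
     p * measure_pmf.expectation (binomial_pmf n p) (\<lambda>k. f (Suc k)) +
     (1-p) * measure_pmf.expectation (binomial_pmf n p) f"
proof -
  have eq: "binomial_pmf (Suc n) p = bernoulli_pmf p \<bind> (\<lambda>b. map_pmf (\<lambda>k. (if b then 1 else 0) + k) (binomial_pmf n p))"
    using p by (simp add: binomial_pmf_Suc map_pmf_def)
  have "measure_pmf.expectation (binomial_pmf (Suc n) p) f =
     (\<Sum>b\<in>UNIV. pmf (bernoulli_pmf p) b *\<^sub>R measure_pmf.expectation (map_pmf (\<lambda>k. (if b then 1 else 0) + k) (binomial_pmf n p)) f)"
    unfolding eq by (rule pmf_expectation_bind) (use p in \<open>auto intro!: finite_imageI finite_set_pmf_binomial_pmf\<close>)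
  also have "\<dots> = p * measure_pmf.expectation (binomial_pmf n p) (\<lambda>k. f (Suc k)) +
     (1-p) * measure_pmf.expectation (binomial_pmf n p) f"
    using p by (simp add: UNIV_bool)
  finally show ?thesis .
qed

lemma binom_mean:
  assumes p: "p \<in> {0..1}"
  shows "measure_pmf.expectation (binomial_pmf n p) real = real n * p"
proof (induction n)
  case 0 thus ?case using p by (simp add: binomial_pmf_0)
next
  case (Suc n)
  have "measure_pmf.expectation (binomial_pmf n p) (\<lambda>k. real (Suc k)) =
        measure_pmf.expectation (binomial_pmf n p) (\<lambda>k. real k + 1)" by (simp add: add.commute)
  also have "\<dots> = real n * p + 1"
    using Suc p by (subst Bochner_Integration.integral_add) auto
  finally show ?case using Suc p by (simp add: binom_exp_Suc algebra_simps)
qed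

lemma binom_var:
  assumes p: "p \<in> {0..1}"
  shows "measure_pmf.expectation (binomial_pmf n p) (\<lambda>k. (real k - real n * p)^2) = real n * p * (1-p)"
proof (induction n)
  case 0 thus ?case using p by (simp add: binomial_pmf_0)
next
  case (Suc n)
  let ?E = "measure_pmf.expectation (binomial_pmf n p)"
  have m: "?E real = real n * p" using binom_mean[OF p] .
  have lin: "?E (\<lambda>k. (real k - real n * p)^2 + 2*a*(real k) + b) = real n * p * (1-p) + 2*a*(real n * p) + b" for a b
    using Suc p m by (simp add: Bochner_Integration.integral_add)
  have s1: "?E (\<lambda>k. (real (Suc k) - real (Suc n) * p)^2) = real n * p * (1-p) + 2*(1-p)*(real n * p) + ((1-p)^2 - 2*(1-p)*real n*p)"
  proof -
    have "?E (\<lambda>k. (real (Suc k) - real (Suc n) * p)^2) = ?E (\<lambda>k. (real k - real n * p)^2 + 2*(1-p)*(real k) + ((1-p)^2 - 2*(1-p)*real n*p))"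
      by (rule Bochner_Integration.integral_cong) (auto simp: power2_eq_square algebra_simps)
    also have "\<dots> = real n * p * (1-p) + 2*((1-p))*(real n * p) + ((1-p)^2 - 2*(1-p)*real n*p)" by (rule lin)
    finally show ?thesis .
  qed
  have s2: "?E (\<lambda>k. (real k - real (Suc n) * p)^2) = real n * p * (1-p) + 2*(-p)*(real n * p) + (p^2 + 2*p*real n*p)"
  proof -
    have "?E (\<lambda>k. (real k - real (Suc n) * p)^2) = ?E (\<lambda>k. (real k - real n * p)^2 + 2*(-p)*(real k) + (p^2 + 2*p*real n*p))"
      by (rule Bochner_Integration.integral_cong) (auto simp: power2_eq_square algebra_simps)
    also have "\<dots> = real n * p * (1-p) + 2*((-p))*(real n * p) + (p^2 + 2*p*real n*p)" by (rule lin)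
    finally show ?thesis .
  qed
  have "measure_pmf.expectation (binomial_pmf (Suc n) p) (\<lambda>k. (real k - real (Suc n) * p)^2) = p * ?E (\<lambda>k. (real (Suc k) - real (Suc n) * p)^2) + (1-p) * ?E (\<lambda>k. (real k - real (Suc n) * p)^2)"
    by (rule binom_exp_Suc[OF p])
  also have "\<dots> = real (Suc n) * p * (1-p)" unfolding s1 s2 by (simp add: power2_eq_square algebra_simps)
  finally show ?case .
qed


lemma finite_vertex_pairs: "finite (vertex_pairs N)"
proof -
  have "vertex_pairs N \<subseteq> {..<N} \<times> {..<N}" by (auto simp: vertex_pairs_def)
  thus ?thesis by (rule finite_subset) auto
qed

lemma card_vertex_pairs: "2 * card (vertex_pairs N) = N * (N - 1)"
proof (induction N)
  case 0 thus ?case by (simp add: vertex_pairs_def)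
next
  case (Suc N)
  have eq: "vertex_pairs (Suc N) = vertex_pairs N \<union> (\<lambda>i. (i, N)) ` {..<N}"
    by (auto simp: vertex_pairs_def)
  have disj: "vertex_pairs N \<inter> (\<lambda>i. (i, N)) ` {..<N} = {}" by (auto simp: vertex_pairs_def)
  have "card (vertex_pairs (Suc N)) = card (vertex_pairs N) + N"
    unfolding eq by (subst card_Un_disjoint) (auto simp: finite_vertex_pairs disj card_image inj_on_def)
  thus ?case using Suc by (cases N) (auto simp: algebra_simps)
qed

lemma gnp_card:
  assumes "p \<in> {0..1}"
  shows "map_pmf card (gnp N p) = binomial_pmf (card (vertex_pairs N)) p"
  unfolding gnp_def map_pmf_comp
  by (rule binomial_pmf_altdef'[symmetric]) (use assms finite_vertex_pairs in auto)

lemma binom_cheb: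
  assumes p: "p \<in> {0..1}" and t: "t > 0"
  shows "measure_pmf.prob (binomial_pmf m p) {k. t \<le> \<bar>real k - real m * p\<bar>} \<le> real m * p * (1-p) / t^2"
proof -
  have "measure_pmf.prob (binomial_pmf m p) {k \<in> space (measure_pmf (binomial_pmf m p)). t \<le> \<bar>real k - measure_pmf.expectation (binomial_pmf m p) real\<bar>}
     \<le> measure_pmf.expectation (binomial_pmf m p) (\<lambda>k. (real k - measure_pmf.expectation (binomial_pmf m p) real)^2) / t^2"
    by (rule measure_pmf.Chebyshev_inequality) (use p t in auto)
  thus ?thesis using binom_mean[OF p] binom_var[OF p] by simp
qed



lemma partA:
  fixes c d \<epsilon> :: real
  assumes c: "c > 0" and d: "d > 0" and cd: "c^2*d/2 < 137" and \<epsilon>: "\<epsilon> > 0"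
  shows "(\<lambda>n::nat. measure_pmf.prob (gnp (nat \<lfloor>c * real n\<rfloor>) (d / real n))
     {E. \<not>(\<bar>real (card E) - real n * c^2 * d / 2\<bar> \<le> \<epsilon> * (real n * c^2 * d / 2)
           \<and> real (card E) < 137 * real n)}) \<longlonglongrightarrow> 0"
proof -
  define K where "K = c^2*d/2"
  have K: "K > 0" using c d by (simp add: K_def)
  define \<kappa> where "\<kappa> = min (\<epsilon>*K) (137 - K) / 2"
  have K137: "K < 137" using cd by (simp add: K_def)
  have \<kappa>: "\<kappa> > 0" "\<kappa> \<le> \<epsilon>*K/2" "\<kappa> \<le> (137 - K)/2" using K \<epsilon> K137 unfolding \<kappa>_def by (auto simp: min_def)
  define D where "D = 3*c*d/2"
  define X where "X = max (max 1 d) (max (D/\<kappa>) (2/c))"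
  have ev: "\<forall>\<^sub>F n in sequentially. X \<le> real n"
    using filterlim_real_sequentially by (simp add: filterlim_at_top)
  have bound: "measure_pmf.prob (gnp (nat \<lfloor>c * real n\<rfloor>) (d / real n))
     {E. \<not>(\<bar>real (card E) - real n * c^2 * d / 2\<bar> \<le> \<epsilon> * (real n * c^2 * d / 2)
           \<and> real (card E) < 137 * real n)} \<le> K / \<kappa>^2 / real n" if n: "X \<le> real n" for n :: nat
  proof -
    have n1: "real n \<ge> 1" and nd: "real n \<ge> d" and nD: "D \<le> \<kappa> * real n" and nc: "c * real n \<ge> 2"
      using n \<kappa> c by (auto simp: X_def field_simps)
    define N where "N = nat \<lfloor>c * real n\<rfloor>"
    define p where "p = d / real n"
    have p: "p \<in> {0..1}" using n1 nd d by (auto simp: p_def field_simps)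
    have rN: "real N = of_int \<lfloor>c * real n\<rfloor>" using c n1 by (simp add: N_def)
    have N1: "c * real n - 1 < real N" "real N \<le> c * real n" unfolding rN by linarith+
    define m where "m = card (vertex_pairs N)"
    have Nge1: "N \<ge> 1" using N1 nc by linarith
    have "real (2 * m) = real (N * (N - 1))" using card_vertex_pairs[of N] by (simp add: m_def)
    hence m2: "2 * real m = real N * (real N - 1)" using Nge1 by (simp add: of_nat_diff)
    define \<mu> where "\<mu> = real m * p"
    have mu_le: "\<mu> \<le> real n * K"
    proof -
      have "real N * (real N - 1) \<le> (c * real n) * (c * real n)"
        using N1 Nge1 mult_mono[of "real N" "c * real n" "real N - 1" "c * real n"] by auto
      hence "real m \<le> (c * real n)^2 / 2" using m2 by (simp add: power2_eq_square)
      hence "real m * p \<le> (c * real n)^2 / 2 * p" using p by (intro mult_right_mono) auto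
      also have "\<dots> = real n * K" using n1 by (simp add: p_def K_def power2_eq_square field_simps)
      finally show ?thesis by (simp add: \<mu>_def)
    qed
    have mu_ge: "real n * K - D \<le> \<mu>"
    proof -
      have "(c * real n - 1) * (c * real n - 2) \<le> real N * (real N - 1)"
        using N1 nc mult_mono[of "c * real n - 1" "real N" "c * real n - 2" "real N - 1"] by auto
      hence "(c * real n - 1) * (c * real n - 2) / 2 * p \<le> real m * p" using m2 p
        by (intro mult_right_mono) auto
      moreover have "(c * real n - 1) * (c * real n - 2) / 2 * p = real n * K - D + d / real n"
        using n1 by (simp add: p_def K_def D_def power2_eq_square field_simps)
      moreover have "d / real n \<ge> 0" using d by simp
      ultimately show ?thesis unfolding \<mu>_def by linarith
    qed
    have sub: "{k. \<not>(\<bar>real k - real n * c^2 * d / 2\<bar> \<le> \<epsilon> * (real n * c^2 * d / 2)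
           \<and> real k < 137 * real n)} \<subseteq> {k. \<kappa> * real n \<le> \<bar>real k - real m * p\<bar>}"
    proof (rule subsetI, rule CollectI, rule ccontr)
      fix k assume k: "k \<in> {k. \<not>(\<bar>real k - real n * c^2 * d / 2\<bar> \<le> \<epsilon> * (real n * c^2 * d / 2)
           \<and> real k < 137 * real n)}" and nk: "\<not> \<kappa> * real n \<le> \<bar>real k - real m * p\<bar>"
      have h1: "\<kappa> * real n \<le> \<epsilon>*K/2 * real n" using \<kappa> n1 by (intro mult_right_mono) auto
      have h2: "\<kappa> * real n \<le> (137 - K)/2 * real n" using \<kappa> n1 by (intro mult_right_mono) auto
      have eK: "\<epsilon> * (real n * c^2 * d / 2) = \<epsilon>*K * real n" by (simp add: K_def)
      have nK: "real n * c^2 * d / 2 = real n * K" by (simp add: K_def)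
      have "\<bar>real k - real n * c^2 * d / 2\<bar> \<le> \<epsilon> * (real n * c^2 * d / 2)"
      proof -
        have h1': "\<epsilon> * (real n * K) = 2 * (\<epsilon>*K/2 * real n)" by (simp add: algebra_simps)
        show ?thesis using nk mu_le mu_ge h1 h1' nD unfolding nK \<mu>_def by linarith
      qed
      moreover have "real k < 137 * real n"
        using nk mu_le h2 unfolding \<mu>_def by (simp add: algebra_simps)
      ultimately show False using k by auto
    qed
    have "measure_pmf.prob (gnp N p)
     {E. \<not>(\<bar>real (card E) - real n * c^2 * d / 2\<bar> \<le> \<epsilon> * (real n * c^2 * d / 2)
           \<and> real (card E) < 137 * real n)} =
       measure_pmf.prob (map_pmf card (gnp N p)) {k. \<not>(\<bar>real k - real n * c^2 * d / 2\<bar> \<le> \<epsilon> * (real n * c^2 * d / 2)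
           \<and> real k < 137 * real n)}"
      by (simp add: measure_map_pmf vimage_def)
    also have "\<dots> \<le> measure_pmf.prob (binomial_pmf m p) {k. \<kappa> * real n \<le> \<bar>real k - real m * p\<bar>}"
      unfolding gnp_card[OF p] m_def[symmetric] by (rule measure_pmf.finite_measure_mono[OF sub]) auto
    also have "\<dots> \<le> real m * p * (1-p) / (\<kappa> * real n)^2"
      by (rule binom_cheb[OF p]) (use \<kappa> n1 in auto)
    also have "\<dots> \<le> real n * K / (\<kappa> * real n)^2"
    proof (rule divide_right_mono)
      have "real m * p * (1-p) \<le> real m * p" using p by (simp add: mult_left_le)
      thus "real m * p * (1-p) \<le> real n * K" using mu_le unfolding \<mu>_def by linarith
    qed simp
    also have "\<dots> = K / \<kappa>^2 / real n" using n1 \<kappa> by (simp add: power2_eq_square field_simps)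
    finally show ?thesis unfolding N_def p_def .
  qed
  show ?thesis
  proof (rule tendsto_sandwich[of "\<lambda>_. 0" _ _ "\<lambda>n. K / \<kappa>^2 / real n"])
    show "\<forall>\<^sub>F n in sequentially. K / \<kappa>^2 / real n \<ge> measure_pmf.prob (gnp (nat \<lfloor>c * real n\<rfloor>) (d / real n))
     {E. \<not>(\<bar>real (card E) - real n * c^2 * d / 2\<bar> \<le> \<epsilon> * (real n * c^2 * d / 2)
           \<and> real (card E) < 137 * real n)}"
      using ev by eventually_elim (rule bound)
    show "(\<lambda>n. K / \<kappa>^2 / real n) \<longlonglongrightarrow> 0" by (rule lim_const_over_n)
  qed auto
qed



lemma prob_no_edges:
  assumes S: "S \<subseteq> {0..<N}" and T: "T \<subseteq> {0..<N}" and ST: "S \<inter> T = {}" and p: "p \<in> {0..1}"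
  shows "measure_pmf.prob (gnp N p) {E. edges_between E S T = 0} \<le> (1-p)^(card S * card T)"
proof -
  define VP where "VP = vertex_pairs N"
  have fVP: "finite VP" unfolding VP_def by (rule finite_vertex_pairs)
  define X where "X = {(i,j). (i\<in>S \<and> j\<in>T) \<or> (i\<in>T \<and> j\<in>S)}"
  define B where "B = (\<lambda>e. if e \<in> X then {False} else (UNIV::bool set))"
  have sub: "(\<lambda>f. {e\<in>VP. f e}) -` {E. edges_between E S T = 0} \<subseteq> Pi VP B"
  proof
    fix f assume "f \<in> (\<lambda>f. {e\<in>VP. f e}) -` {E. edges_between E S T = 0}"
    hence "card {(i, j) \<in> {e\<in>VP. f e}. (i \<in> S \<and> j \<in> T) \<or> (i \<in> T \<and> j \<in> S)} = 0"
      by (simp add: edges_between_def)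
    moreover have "finite {(i, j) \<in> {e\<in>VP. f e}. (i \<in> S \<and> j \<in> T) \<or> (i \<in> T \<and> j \<in> S)}"
      by (rule finite_subset[OF _ fVP]) auto
    ultimately have "{(i, j) \<in> {e\<in>VP. f e}. (i \<in> S \<and> j \<in> T) \<or> (i \<in> T \<and> j \<in> S)} = {}" by simp
    thus "f \<in> Pi VP B" by (auto simp: B_def X_def Pi_def)
  qed
  have "measure_pmf.prob (gnp N p) {E. edges_between E S T = 0} =
      measure_pmf.prob (Pi_pmf VP False (\<lambda>_. bernoulli_pmf p)) ((\<lambda>f. {e\<in>VP. f e}) -` {E. edges_between E S T = 0})"
    unfolding gnp_def VP_def by (simp add: measure_map_pmf)
  also have "\<dots> \<le> measure_pmf.prob (Pi_pmf VP False (\<lambda>_. bernoulli_pmf p)) (Pi VP B)"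
    by (rule measure_pmf.finite_measure_mono[OF sub]) auto
  also have "\<dots> = (\<Prod>e\<in>VP. measure_pmf.prob (bernoulli_pmf p) (B e))"
    by (rule measure_Pi_pmf_Pi[OF fVP])
  also have "\<dots> = (\<Prod>e\<in>VP. if e \<in> X then 1-p else 1)"
    using p by (intro prod.cong) (auto simp: B_def measure_pmf_single)
  also have "\<dots> = (\<Prod>e\<in>{e\<in>VP. e \<in> X}. 1-p)"
    by (rule prod.inter_filter[symmetric, OF fVP])
  also have "\<dots> = (1-p)^card {e\<in>VP. e \<in> X}" by simp
  also have "\<dots> \<le> (1-p)^(card S * card T)"
  proof (rule power_decreasing)
    have fS: "finite S" "finite T" using S T finite_subset by auto
    have "inj_on (\<lambda>(u,v). (min u v, max u v)) (S \<times> T)"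
      using ST by (auto simp: inj_on_def min_def max_def split: if_splits)
    moreover have "(\<lambda>(u,v). (min u v, max u v)) ` (S \<times> T) \<subseteq> {e\<in>VP. e \<in> X}"
    proof (rule image_subsetI)
      fix x assume "x \<in> S \<times> T"
      then obtain u v where uv: "x = (u,v)" "u \<in> S" "v \<in> T" by blast
      have "u < N" "v < N" "u \<noteq> v" using uv S T ST by auto
      thus "(\<lambda>(u,v). (min u v, max u v)) x \<in> {e\<in>VP. e \<in> X}"
        using uv by (auto simp: VP_def vertex_pairs_def X_def min_def max_def)
    qed
    moreover have "finite {e\<in>VP. e \<in> X}" using fVP by simp
    ultimately have "card (S \<times> T) \<le> card {e\<in>VP. e \<in> X}" by (rule card_inj_on_le)
    thus "card S * card T \<le> card {e\<in>VP. e \<in> X}" by (simp add: card_cartesian_product)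
  qed (use p in auto)
  finally show ?thesis .
qed

lemma union_bound:
  assumes p: "p \<in> {0..1}"
  shows "measure_pmf.prob (gnp N p) {E. \<exists>S T. S \<subseteq> {0..<N} \<and> T \<subseteq> {0..<N} \<and> S \<inter> T = {}
           \<and> card S = s \<and> card T = s \<and> edges_between E S T = 0}
     \<le> real (N choose s) * real ((N - s) choose s) * (1-p)^(s * s)"
proof -
  define P where "P = Sigma {S. S \<subseteq> {0..<N} \<and> card S = s} (\<lambda>S. {T. T \<subseteq> {0..<N} - S \<and> card T = s})"
  define ev where "ev = (\<lambda>(S,T). {E. edges_between E S T = 0})"
  have fin: "finite P" unfolding P_def by (rule finite_SigmaI) auto
  have sub: "{E. \<exists>S T. S \<subseteq> {0..<N} \<and> T \<subseteq> {0..<N} \<and> S \<inter> T = {}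
           \<and> card S = s \<and> card T = s \<and> edges_between E S T = 0} \<subseteq> \<Union> (ev ` P)"
  proof
    fix E assume "E \<in> {E. \<exists>S T. S \<subseteq> {0..<N} \<and> T \<subseteq> {0..<N} \<and> S \<inter> T = {}
           \<and> card S = s \<and> card T = s \<and> edges_between E S T = 0}"
    then obtain S T where h: "S \<subseteq> {0..<N}" "T \<subseteq> {0..<N}" "S \<inter> T = {}"
           "card S = s" "card T = s" "edges_between E S T = 0" by blast
    have "(S,T) \<in> P" using h by (auto simp: P_def)
    moreover have "E \<in> ev (S,T)" using h by (simp add: ev_def)
    ultimately show "E \<in> \<Union> (ev ` P)" by blast
  qed
  have "measure_pmf.prob (gnp N p) {E. \<exists>S T. S \<subseteq> {0..<N} \<and> T \<subseteq> {0..<N} \<and> S \<inter> T = {}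
           \<and> card S = s \<and> card T = s \<and> edges_between E S T = 0} \<le> measure_pmf.prob (gnp N p) (\<Union> (ev ` P))"
    by (rule measure_pmf.finite_measure_mono[OF sub]) auto
  also have "\<dots> \<le> (\<Sum>x\<in>P. measure_pmf.prob (gnp N p) (ev x))"
    by (rule measure_pmf.finite_measure_subadditive_finite[OF fin]) auto
  also have "\<dots> \<le> (\<Sum>x\<in>P. (1-p)^(s * s))"
  proof (rule sum_mono)
    fix x assume "x \<in> P"
    then obtain S T where x: "x = (S,T)" "S \<subseteq> {0..<N}" "card S = s" "T \<subseteq> {0..<N} - S" "card T = s"
      by (auto simp: P_def)
    show "measure_pmf.prob (gnp N p) (ev x) \<le> (1-p)^(s * s)"
      using prob_no_edges[of S N T p] x p by (auto simp: ev_def)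
  qed
  also have "\<dots> = real (card P) * (1-p)^(s * s)" by simp
  also have "card P = (N choose s) * ((N - s) choose s)"
  proof -
    have "card P = (\<Sum>S\<in>{S. S \<subseteq> {0..<N} \<and> card S = s}. card {T. T \<subseteq> {0..<N} - S \<and> card T = s})"
      unfolding P_def by (rule card_SigmaI) auto
    also have "\<dots> = (\<Sum>S\<in>{S. S \<subseteq> {0..<N} \<and> card S = s}. (N - s) choose s)"
    proof (rule sum.cong[OF refl])
      fix S assume S: "S \<in> {S. S \<subseteq> {0..<N} \<and> card S = s}"
      have "card ({0..<N} - S) = N - s" using S by (subst card_Diff_subset) (auto intro: finite_subset)
      thus "card {T. T \<subseteq> {0..<N} - S \<and> card T = s} = (N - s) choose s"
        by (subst n_subsets) auto
    qed
    also have "\<dots> = (N choose s) * ((N - s) choose s)" by (simp add: n_subsets)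
    finally show ?thesis .
  qed
  finally show ?thesis by simp
qed

lemma binom_term_le:
  fixes a b :: real
  assumes "0 \<le> a" "0 \<le> b" "k \<le> m"
  shows "real (m choose k) * a^k * b^(m-k) \<le> (a+b)^m"
proof -
  have "real (m choose k) * a^k * b^(m-k) \<le> (\<Sum>j\<le>m. real (m choose j) * a^j * b^(m-j))"
    by (rule member_le_sum) (use assms in auto)
  thus ?thesis by (simp add: binomial_ring)
qed

lemma multinom_le:
  assumes "N = 2 * s + r"
  shows "real (N choose s) * real ((N - s) choose s) * (real s^s * real s^s * real r^r) \<le> real N ^ N"
proof -
  have h1: "real (N choose s) * real s^s * real (N-s)^(N-s) \<le> real N ^ N"
    using binom_term_le[of "real s" "real (N-s)" s N] assms by (simp add: of_nat_diff)
  have h2: "real ((N-s) choose s) * real s^s * real r^r \<le> real (N-s) ^ (N-s)"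
    using binom_term_le[of "real s" "real r" s "N-s"] assms by (simp add: of_nat_diff)
  have "real (N choose s) * real ((N - s) choose s) * (real s^s * real s^s * real r^r)
     = (real (N choose s) * real s^s) * (real ((N-s) choose s) * real s^s * real r^r)" by (simp add: algebra_simps)
  also have "\<dots> \<le> (real (N choose s) * real s^s) * real (N-s) ^ (N-s)"
    by (rule mult_left_mono[OF h2]) auto
  also have "\<dots> \<le> real N ^ N" using h1 by (simp add: algebra_simps)
  finally show ?thesis .
qed



lemma exp_nat_ln: "y > 0 \<Longrightarrow> exp (real k * ln y) = y ^ k"
  by (subst ln_realpow[symmetric]) auto

lemma floor_ratio_lim:
  fixes b :: real assumes b: "b \<ge> 0"
  shows "(\<lambda>n. real (nat \<lfloor>real n * b\<rfloor>) / real n) \<longlonglongrightarrow> b"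
proof (rule tendsto_sandwich[of "\<lambda>n. b - 1 / real n" _ _ "\<lambda>n. b"])
  have "\<forall>\<^sub>F n in sequentially. n \<ge> 1" by (rule eventually_ge_at_top)
  thus "\<forall>\<^sub>F n in sequentially. b - 1 / real n \<le> real (nat \<lfloor>real n * b\<rfloor>) / real n"
  proof eventually_elim
    case (elim n)
    have "real (nat \<lfloor>real n * b\<rfloor>) = of_int \<lfloor>real n * b\<rfloor>" using b by simp
    hence "real n * b - 1 \<le> real (nat \<lfloor>real n * b\<rfloor>)" by linarith
    hence "(real n * b - 1) / real n \<le> real (nat \<lfloor>real n * b\<rfloor>) / real n"
      by (rule divide_right_mono) auto
    moreover have "b - 1 / real n = (real n * b - 1) / real n" using elim by (simp add: field_simps)
    ultimately show ?case by simp
  qed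
  have "\<forall>\<^sub>F n in sequentially. n \<ge> 1" by (rule eventually_ge_at_top)
  thus "\<forall>\<^sub>F n in sequentially. real (nat \<lfloor>real n * b\<rfloor>) / real n \<le> b"
  proof eventually_elim
    case (elim n)
    have "real (nat \<lfloor>real n * b\<rfloor>) = of_int \<lfloor>real n * b\<rfloor>" using b by simp
    hence "real (nat \<lfloor>real n * b\<rfloor>) \<le> real n * b" by linarith
    thus ?case using elim by (simp add: field_simps)
  qed
  show "(\<lambda>n. b - 1 / real n) \<longlonglongrightarrow> b"
    using tendsto_diff[OF tendsto_const lim_const_over_n[of 1], of b] by simp
qed simp

lemma per_n_bound:
  fixes d :: real and n N s r :: nat
  assumes n: "real n \<ge> 1" "real n \<ge> d" and d: "d > 0" and s: "s > 0" and r: "r > 0" and Nsr: "N = 2 * s + r"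
  shows "measure_pmf.prob (gnp N (d / real n))
     {E. \<exists>S T. S \<subseteq> {0..<N} \<and> T \<subseteq> {0..<N} \<and> S \<inter> T = {}
           \<and> card S = s \<and> card T = s \<and> edges_between E S T = 0}
     \<le> exp (2 * real s * ln (real N / real s) + real r * ln (real N / real r) - d / real n * (real s * real s))"
proof -
  define p where "p = d / real n"
  have p: "p \<in> {0..1}" using n d by (auto simp: p_def field_simps)
  have Np: "real N > 0" using Nsr s by simp
  have "measure_pmf.prob (gnp N p)
     {E. \<exists>S T. S \<subseteq> {0..<N} \<and> T \<subseteq> {0..<N} \<and> S \<inter> T = {}
           \<and> card S = s \<and> card T = s \<and> edges_between E S T = 0}
     \<le> real (N choose s) * real ((N - s) choose s) * (1-p)^(s * s)" by (rule union_bound[OF p])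
  also have "\<dots> \<le> (real N ^ N / (real s^s * real s^s * real r^r)) * exp (- p * (real s * real s))"
  proof (rule mult_mono)
    show "real (N choose s) * real ((N - s) choose s) \<le> real N ^ N / (real s^s * real s^s * real r^r)"
      using multinom_le[OF Nsr] s r by (simp add: field_simps)
    have e: "1 - p \<le> exp (-p)" using exp_ge_add_one_self[of "-p"] by linarith
    have "(1-p)^(s * s) \<le> exp (-p) ^ (s * s)"
      by (rule power_mono[OF e]) (use p in auto)
    also have "\<dots> = exp (- p * (real s * real s))"
      by (subst exp_of_nat_mult[symmetric]) (simp add: algebra_simps)
    finally show "(1-p)^(s * s) \<le> exp (- p * (real s * real s))" .
  qed (use p s r in auto)
  also have "\<dots> = exp (2 * real s * ln (real N / real s) + real r * ln (real N / real r) - p * (real s * real s))"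
  proof -
    have "exp (2 * real s * ln (real N / real s)) = (real N / real s) ^ (2 * s)"
      using exp_nat_ln[of "real N / real s" "2 * s"] Np s by simp
    moreover have "exp (real r * ln (real N / real r)) = (real N / real r) ^ r"
      using exp_nat_ln[of "real N / real r" r] Np r by simp
    moreover have "(real N / real s) ^ (2 * s) * (real N / real r) ^ r = real N ^ N / (real s^s * real s^s * real r^r)"
    proof -
      have "real s ^ (2 * s) = real s^s * real s^s" by (simp add: mult_2 power_add)
      moreover have "real (2 * s + r) ^ (2 * s + r) = real (2 * s + r) ^ (2 * s) * real (2 * s + r) ^ r" by (simp add: power_add)
      ultimately show ?thesis unfolding Nsr by (simp add: power_divide)
    qed
    ultimately show ?thesis by (simp add: exp_add exp_diff exp_minus field_simps)
  qed
  finally show ?thesis unfolding p_def .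
qed



lemma partB:
  fixes c d :: real
  assumes c: "c > 0" and d: "d > 0" and b: "(c-3)/4 > 0" and cb: "c - 2*((c-3)/4) > 0"
   and F: "2*((c-3)/4) * ln (c/((c-3)/4)) + (c - 2*((c-3)/4)) * ln (c/(c - 2*((c-3)/4))) - d*((c-3)/4)^2 < 0"
  shows "(\<lambda>n::nat. measure_pmf.prob (gnp (nat \<lfloor>c * real n\<rfloor>) (d / real n))
     {E. \<not>(\<forall>S T. S \<subseteq> {0..<nat \<lfloor>c * real n\<rfloor>} \<and> T \<subseteq> {0..<nat \<lfloor>c * real n\<rfloor>}
                  \<and> S \<inter> T = {}
                  \<and> card S = nat \<lfloor>real n * (c - 3) / 4\<rfloor>
                  \<and> card T = nat \<lfloor>real n * (c - 3) / 4\<rfloor>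
                  \<longrightarrow> edges_between E S T \<noteq> 0)}) \<longlonglongrightarrow> 0"
proof -
  define b where "b = (c-3)/4"
  have b0: "b > 0" and cb': "c - 2*b > 0" using b cb by (auto simp: b_def)
  have eqs: "real n * (c - 3) / 4 = real n * b" for n by (simp add: b_def)
  define x where "x = (\<lambda>n. real (nat \<lfloor>real n * b\<rfloor>) / real n)"
  define z where "z = (\<lambda>n. real (nat \<lfloor>c * real n\<rfloor>) / real n)"
  define \<Phi> where "\<Phi> = (\<lambda>x z. 2*x*ln(z/x) + (z-2*x)*ln(z/(z-2*x)) - d*x^2)"
  have xl: "x \<longlonglongrightarrow> b" unfolding x_def by (rule floor_ratio_lim) (use b0 in auto)
  have zl: "z \<longlonglongrightarrow> c" unfolding z_def using floor_ratio_lim[of c] c by (simp add: mult.commute)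
  have zxl: "(\<lambda>n. z n - 2 * x n) \<longlonglongrightarrow> c - 2*b" by (intro tendsto_intros zl xl)
  have Fb: "\<Phi> b c < 0" using F by (simp add: \<Phi>_def b_def)
  have \<Phi>l: "(\<lambda>n. \<Phi> (x n) (z n)) \<longlonglongrightarrow> \<Phi> b c"
    unfolding \<Phi>_def
    by (intro tendsto_intros xl zl zxl) (use b0 cb' c in auto)
  have ev1: "\<forall>\<^sub>F n in sequentially. x n > 0" using order_tendstoD(1)[OF xl b0] .
  have ev2: "\<forall>\<^sub>F n in sequentially. z n - 2 * x n > 0" using order_tendstoD(1)[OF zxl cb'] .
  have ev3: "\<forall>\<^sub>F n in sequentially. \<Phi> (x n) (z n) < \<Phi> b c / 2"
    using order_tendstoD(2)[OF \<Phi>l, of "\<Phi> b c / 2"] Fb by linarith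
  have ev4: "\<forall>\<^sub>F n in sequentially. max 1 d \<le> real n"
    using filterlim_real_sequentially unfolding filterlim_at_top by blast
  have bound: "measure_pmf.prob (gnp (nat \<lfloor>c * real n\<rfloor>) (d / real n))
     {E. \<not>(\<forall>S T. S \<subseteq> {0..<nat \<lfloor>c * real n\<rfloor>} \<and> T \<subseteq> {0..<nat \<lfloor>c * real n\<rfloor>}
                  \<and> S \<inter> T = {}
                  \<and> card S = nat \<lfloor>real n * (c - 3) / 4\<rfloor>
                  \<and> card T = nat \<lfloor>real n * (c - 3) / 4\<rfloor>
                  \<longrightarrow> edges_between E S T \<noteq> 0)} \<le> exp (\<Phi> b c / 2) ^ n"
    if h: "x n > 0" "z n - 2 * x n > 0" "\<Phi> (x n) (z n) < \<Phi> b c / 2" "max 1 d \<le> real n" for n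
  proof -
    define N where "N = nat \<lfloor>c * real n\<rfloor>"
    define s where "s = nat \<lfloor>real n * b\<rfloor>"
    have n1: "real n \<ge> 1" "real n \<ge> d" using h(4) by auto
    have xs: "x n = real s / real n" and zN: "z n = real N / real n" by (simp_all add: x_def z_def s_def N_def)
    have s0: "s > 0" using h(1) xs by (cases "s = 0") auto
    have "real N / real n - 2 * (real s / real n) > 0" using h(2) xs zN by simp
    hence "real N - 2 * real s > 0" using n1 by (simp add: field_simps)
    hence N2: "N > 2 * s" by linarith
    define r where "r = N - 2 * s"
    have r0: "r > 0" and Nsr: "N = 2 * s + r" using N2 by (auto simp: r_def)
    have rr: "real r = real N - 2 * real s" using Nsr by simp
    have set_eq: "{E. \<not>(\<forall>S T. S \<subseteq> {0..<nat \<lfloor>c * real n\<rfloor>} \<and> T \<subseteq> {0..<nat \<lfloor>c * real n\<rfloor>}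
                  \<and> S \<inter> T = {}
                  \<and> card S = nat \<lfloor>real n * (c - 3) / 4\<rfloor>
                  \<and> card T = nat \<lfloor>real n * (c - 3) / 4\<rfloor>
                  \<longrightarrow> edges_between E S T \<noteq> 0)} =
      {E. \<exists>S T. S \<subseteq> {0..<N} \<and> T \<subseteq> {0..<N} \<and> S \<inter> T = {}
           \<and> card S = s \<and> card T = s \<and> edges_between E S T = 0}"
      unfolding eqs N_def[symmetric] s_def[symmetric] by auto
    have "measure_pmf.prob (gnp N (d / real n))
      {E. \<exists>S T. S \<subseteq> {0..<N} \<and> T \<subseteq> {0..<N} \<and> S \<inter> T = {}
           \<and> card S = s \<and> card T = s \<and> edges_between E S T = 0}
      \<le> exp (2 * real s * ln (real N / real s) + real r * ln (real N / real r) - d / real n * (real s * real s))"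
      by (rule per_n_bound[OF n1 d s0 r0 Nsr])
    also have "2 * real s * ln (real N / real s) + real r * ln (real N / real r) - d / real n * (real s * real s)
        = real n * \<Phi> (x n) (z n)"
    proof -
      have e1: "z n / x n = real N / real s" using n1 s0 unfolding xs zN by (simp add: field_simps)
      have e2: "z n - 2 * x n = real r / real n" unfolding xs zN rr using n1 by (simp add: field_simps)
      have e3: "z n / (real r / real n) = real N / real r" unfolding zN using n1 r0 by (simp add: field_simps)
      have alg: "\<And>A B u v w. (w::real) > 0 \<Longrightarrow> 2 * u * A + v * B - d / w * (u * u) = w * (2 * (u / w) * A + (v / w) * B - d * (u / w)^2)"
        by (simp add: field_simps power2_eq_square)

      show ?thesis unfolding \<Phi>_def e1 e2 e3 unfolding xs using alg[of "real n"] n1 by simp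
    qed
    also have "exp (real n * \<Phi> (x n) (z n)) \<le> exp (real n * (\<Phi> b c / 2))"
      using h(3) n1 by (simp add: mult_left_mono)
    also have "\<dots> = exp (\<Phi> b c / 2) ^ n" using exp_of_nat_mult[of n "\<Phi> b c / 2"] by simp
    finally show ?thesis unfolding set_eq N_def .
  qed
  show ?thesis
  proof (rule tendsto_sandwich[of "\<lambda>_. 0" _ _ "\<lambda>n. exp (\<Phi> b c / 2) ^ n"])
    show "\<forall>\<^sub>F n in sequentially. measure_pmf.prob (gnp (nat \<lfloor>c * real n\<rfloor>) (d / real n))
     {E. \<not>(\<forall>S T. S \<subseteq> {0..<nat \<lfloor>c * real n\<rfloor>} \<and> T \<subseteq> {0..<nat \<lfloor>c * real n\<rfloor>}
                  \<and> S \<inter> T = {}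
                  \<and> card S = nat \<lfloor>real n * (c - 3) / 4\<rfloor>
                  \<and> card T = nat \<lfloor>real n * (c - 3) / 4\<rfloor>
                  \<longrightarrow> edges_between E S T \<noteq> 0)} \<le> exp (\<Phi> b c / 2) ^ n"
      using ev1 ev2 ev3 ev4 by eventually_elim (rule bound)
    show "(\<lambda>n. exp (\<Phi> b c / 2) ^ n) \<longlonglongrightarrow> 0"
      by (rule LIMSEQ_power_zero) (use Fb in simp)
  qed auto
qed



theorem lemma2p2:
  fixes c d :: real
  assumes "c = 7.29" and "d = 5.14"
  shows "\<forall>\<epsilon>>0. (\<lambda>n::nat.
     measure_pmf.prob (gnp (nat \<lfloor>c * real n\<rfloor>) (d / real n))
       {E. \<bar>real (card E) - real n * c\<^sup>2 * d / 2\<bar> \<le> \<epsilon> * (real n * c\<^sup>2 * d / 2)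
           \<and> real (card E) < 137 * real n
           \<and> (\<forall>S T. S \<subseteq> {0..<nat \<lfloor>c * real n\<rfloor>} \<and> T \<subseteq> {0..<nat \<lfloor>c * real n\<rfloor>}
                  \<and> S \<inter> T = {}
                  \<and> card S = nat \<lfloor>real n * (c - 3) / 4\<rfloor>
                  \<and> card T = nat \<lfloor>real n * (c - 3) / 4\<rfloor>
                  \<longrightarrow> edges_between E S T \<noteq> 0)})
     \<longlonglongrightarrow> 1"
proof (intro allI impI)
  fix \<epsilon> :: real assume \<epsilon>: "\<epsilon> > 0"
  have c: "c > 0" and d: "d > 0" using assms by auto
  have cd: "c^2*d/2 < 137" unfolding assms by (simp add: power2_eq_square)
  have b: "(c-3)/4 > 0" and cb: "c - 2*((c-3)/4) > 0" using assms by auto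
  have F: "2*((c-3)/4) * ln (c/((c-3)/4)) + (c - 2*((c-3)/4)) * ln (c/(c - 2*((c-3)/4))) - d*((c-3)/4)^2 < 0"
    using F_neg unfolding assms by simp
  define GA where "GA = (\<lambda>n::nat. {E::(nat\<times>nat) set. \<bar>real (card E) - real n * c^2 * d / 2\<bar> \<le> \<epsilon> * (real n * c^2 * d / 2)
           \<and> real (card E) < 137 * real n})"
  define GB where "GB = (\<lambda>n::nat. {E::(nat\<times>nat) set. (\<forall>S T. S \<subseteq> {0..<nat \<lfloor>c * real n\<rfloor>} \<and> T \<subseteq> {0..<nat \<lfloor>c * real n\<rfloor>}
                  \<and> S \<inter> T = {}
                  \<and> card S = nat \<lfloor>real n * (c - 3) / 4\<rfloor>
                  \<and> card T = nat \<lfloor>real n * (c - 3) / 4\<rfloor>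
                  \<longrightarrow> edges_between E S T \<noteq> 0)})"
  define M where "M = (\<lambda>n::nat. gnp (nat \<lfloor>c * real n\<rfloor>) (d / real n))"
  have A: "(\<lambda>n. measure_pmf.prob (M n) (- GA n)) \<longlonglongrightarrow> 0"
    using partA[OF c d cd \<epsilon>] unfolding M_def GA_def by (simp add: Compl_eq)
  have B: "(\<lambda>n. measure_pmf.prob (M n) (- GB n)) \<longlonglongrightarrow> 0"
    using partB[OF c d b cb F] unfolding M_def GB_def by (simp add: Compl_eq)
  have eq: "{E. \<bar>real (card E) - real n * c\<^sup>2 * d / 2\<bar> \<le> \<epsilon> * (real n * c\<^sup>2 * d / 2)
           \<and> real (card E) < 137 * real n
           \<and> (\<forall>S T. S \<subseteq> {0..<nat \<lfloor>c * real n\<rfloor>} \<and> T \<subseteq> {0..<nat \<lfloor>c * real n\<rfloor>}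
                  \<and> S \<inter> T = {}
                  \<and> card S = nat \<lfloor>real n * (c - 3) / 4\<rfloor>
                  \<and> card T = nat \<lfloor>real n * (c - 3) / 4\<rfloor>
                  \<longrightarrow> edges_between E S T \<noteq> 0)} = UNIV - (- GA n \<union> - GB n)" for n
    unfolding GA_def GB_def by auto
  have lower: "1 - measure_pmf.prob (M n) (- GA n) - measure_pmf.prob (M n) (- GB n)
      \<le> measure_pmf.prob (M n) (UNIV - (- GA n \<union> - GB n))" for n
  proof -
    have "measure_pmf.prob (M n) (- GA n \<union> - GB n) \<le> measure_pmf.prob (M n) (- GA n) + measure_pmf.prob (M n) (- GB n)"
      by (rule measure_subadditive) (auto simp: measure_pmf.emeasure_eq_measure)
    moreover have "measure_pmf.prob (M n) (UNIV - (- GA n \<union> - GB n)) = 1 - measure_pmf.prob (M n) (- GA n \<union> - GB n)"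
      using measure_pmf.prob_compl[of "- GA n \<union> - GB n" "M n"] by simp
    ultimately show ?thesis by linarith
  qed
  have "(\<lambda>n. measure_pmf.prob (M n) (UNIV - (- GA n \<union> - GB n))) \<longlonglongrightarrow> 1"
  proof (rule tendsto_sandwich[of "\<lambda>n. 1 - measure_pmf.prob (M n) (- GA n) - measure_pmf.prob (M n) (- GB n)" _ _ "\<lambda>_. 1"])
    show "(\<lambda>n. 1 - measure_pmf.prob (M n) (- GA n) - measure_pmf.prob (M n) (- GB n)) \<longlonglongrightarrow> 1"
      using tendsto_diff[OF tendsto_diff[OF tendsto_const A] B, of 1] by simp
  qed (use lower in auto)
  thus "(\<lambda>n::nat.
     measure_pmf.prob (gnp (nat \<lfloor>c * real n\<rfloor>) (d / real n))
       {E. \<bar>real (card E) - real n * c\<^sup>2 * d / 2\<bar> \<le> \<epsilon> * (real n * c\<^sup>2 * d / 2)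
           \<and> real (card E) < 137 * real n
           \<and> (\<forall>S T. S \<subseteq> {0..<nat \<lfloor>c * real n\<rfloor>} \<and> T \<subseteq> {0..<nat \<lfloor>c * real n\<rfloor>}
                  \<and> S \<inter> T = {}
                  \<and> card S = nat \<lfloor>real n * (c - 3) / 4\<rfloor>
                  \<and> card T = nat \<lfloor>real n * (c - 3) / 4\<rfloor>
                  \<longrightarrow> edges_between E S T \<noteq> 0)})
     \<longlonglongrightarrow> 1"
    unfolding eq M_def .
qed

end
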